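(* For a nonzero ideal $E$ of $C(X)_\mathcal{P}$ the following are equivalent: (1) $E$ intersects every nonzero $z$-ideal of $C(X)_\mathcal{P}$ nontrivially; (2) $E$ is an essential ideal of $C(X)_\mathcal{P}$; (3) $int_{X_\mathcal{P}}\bigcap Z_\mathcal{P}[E]=\emptyset$, i.e. $\bigcap\{Z_\mathcal{P}(f): f\in E\}$ is nowhere dense in $X_\mathcal{P}$.
   Context: Let $(X,\tau)$ be a $T_1$ topological space and $\mathcal{P}$ an ideal of closed subsets of $X$ (a nonempty family of closed sets closed under finite unions and under taking closed subsets). For $f\colon X\to\mathbb{R}$, $D_f$ denotes the set of points of discontinuity of $f$, and $C(X)_\mathcal{P}=\{f\colon X\to\mathbb{R} : \overline{D_f}\in\mathcal{P}\}$, a commutative ring with unity under pointwise operations. For $f\in C(X)_\mathcal{P}$, $Z_\mathcal{P}(f)=\{x: f(x)=0\}$, $coz(f)=X\setminus Z_\mathcal{P}(f)$, and for an ideal $I$, $Z_\mathcal{P}[I]=\{Z_\mathcal{P}(f): f\in I\}$. $X_\mathcal{P}$ is $X$ with the topology having base $\{coz(f): f\in C(X)_\mathcal{P}\}$, $int_{X_\mathcal{P}}$ its interior operator. An ideal is essential if it intersects every nonzero ideal nontrivially. In a commutative ring, $M(a)$ is the intersection of all maximal ideals containing $a$, and an ideal $I$ is a $z$-ideal if $a\in I\Rightarrow M(a)\subseteq I$. *)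

theory Defs
  imports "HOL-Analysis.Analysis" "HOL-Algebra.Ideal"
begin

definition cont_at :: "'a topology \<Rightarrow> ('a \<Rightarrow> real) \<Rightarrow> 'a \<Rightarrow> bool" where
  "cont_at X f x \<longleftrightarrow>
     (\<forall>V. open V \<and> f x \<in> V \<longrightarrow> (\<exists>U. openin X U \<and> x \<in> U \<and> f ` U \<subseteq> V))"

definition disc_set :: "'a topology \<Rightarrow> ('a \<Rightarrow> real) \<Rightarrow> 'a set" where
  "disc_set X f = {x \<in> topspace X. \<not> cont_at X f x}"

definition closed_ideal :: "'a topology \<Rightarrow> 'a set set \<Rightarrow> bool" where
  "closed_ideal X P \<longleftrightarrow> P \<noteq> {} \<and> (\<forall>A\<in>P. closedin X A)
     \<and> (\<forall>A\<in>P. \<forall>B\<in>P. A \<union> B \<in> P)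
     \<and> (\<forall>A\<in>P. \<forall>B. closedin X B \<and> B \<subseteq> A \<longrightarrow> B \<in> P)"

(* C(X)_P; functions X -> R are represented as functions vanishing off topspace X *)
definition CP :: "'a topology \<Rightarrow> 'a set set \<Rightarrow> ('a \<Rightarrow> real) set" where
  "CP X P = {f. (\<forall>x. x \<notin> topspace X \<longrightarrow> f x = 0) \<and> X closure_of (disc_set X f) \<in> P}"

definition CP_ring :: "'a topology \<Rightarrow> 'a set set \<Rightarrow> ('a \<Rightarrow> real) ring" where
  "CP_ring X P = \<lparr> carrier = CP X P,
                   monoid.mult = (\<lambda>f g x. f x * g x),
                   one = (\<lambda>x. if x \<in> topspace X then 1 else 0),
                   zero = (\<lambda>x. 0),
                   add = (\<lambda>f g x. f x + g x) \<rparr>"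

definition ZP :: "'a topology \<Rightarrow> ('a \<Rightarrow> real) \<Rightarrow> 'a set" where
  "ZP X f = {x \<in> topspace X. f x = 0}"

definition coz :: "'a topology \<Rightarrow> ('a \<Rightarrow> real) \<Rightarrow> 'a set" where
  "coz X f = topspace X - ZP X f"

definition XP :: "'a topology \<Rightarrow> 'a set set \<Rightarrow> 'a topology" where
  "XP X P = topology_generated_by {coz X f | f. f \<in> CP X P}"

definition Mset :: "('b, 'm) ring_scheme \<Rightarrow> 'b \<Rightarrow> 'b set" where
  "Mset R a = carrier R \<inter> \<Inter> {M. maximalideal M R \<and> a \<in> M}"

definition z_ideal :: "('b, 'm) ring_scheme \<Rightarrow> 'b set \<Rightarrow> bool" where
  "z_ideal R I \<longleftrightarrow> ideal I R \<and> (\<forall>a\<in>I. Mset R a \<subseteq> I)"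

definition essential_ideal :: "('b, 'm) ring_scheme \<Rightarrow> 'b set \<Rightarrow> bool" where
  "essential_ideal R E \<longleftrightarrow> ideal E R \<and>
     (\<forall>I. ideal I R \<and> I \<noteq> {\<zero>\<^bsub>R\<^esub>} \<longrightarrow> E \<inter> I \<noteq> {\<zero>\<^bsub>R\<^esub>})"

end

theory Submission
  imports Defs
begin

lemma CPr_simps[simp]:
  "carrier (CP_ring X P) = CP X P"
  "mult (CP_ring X P) = (\<lambda>f g x. f x * g x)"
  "add (CP_ring X P) = (\<lambda>f g x. f x + g x)"
  "zero (CP_ring X P) = (\<lambda>x. 0)"
  "one (CP_ring X P) = (\<lambda>x. if x \<in> topspace X then 1 else 0)"
  by (simp_all add: CP_ring_def)

lemma CP_neg:
  assumes r: "ring (CP_ring X P)" and f: "f \<in> CP X P"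
  shows "a_inv (CP_ring X P) f = (\<lambda>x. - f x)"
proof -
  interpret ring "CP_ring X P" by (rule r)
  have h: "f \<oplus>\<^bsub>CP_ring X P\<^esub> a_inv (CP_ring X P) f = \<zero>\<^bsub>CP_ring X P\<^esub>"
    by (rule r_neg) (simp add: f)
  from h have hh: "\<And>x. f x + a_inv (CP_ring X P) f x = 0" by (simp add: fun_eq_iff)
  show ?thesis
  proof (rule ext)
    fix x show "a_inv (CP_ring X P) f x = - f x" using hh[of x] by linarith
  qed
qed

lemma CP_const:
  assumes "closed_ideal X P"
  shows "(\<lambda>x. if x \<in> topspace X then c else 0) \<in> CP X P"
proof -
  define g where "g = (\<lambda>x. if x \<in> topspace X then c else (0::real))"
  have gc: "g ` topspace X \<subseteq> {c}" unfolding g_def by auto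
  have "cont_at X g x" if x: "x \<in> topspace X" for x
    unfolding cont_at_def
  proof (intro allI impI)
    fix V :: "real set" assume V: "open V \<and> g x \<in> V"
    have "g x = c" using x unfolding g_def by simp
    hence "{c} \<subseteq> V" using V by simp
    hence "g ` topspace X \<subseteq> V" using gc by (rule order_trans[rotated])
    thus "\<exists>U. openin X U \<and> x \<in> U \<and> g ` U \<subseteq> V"
      using x openin_topspace[of X] by blast
  qed
  hence "disc_set X g = {}" unfolding disc_set_def by blast
  moreover have "{} \<in> P"
  proof -
    obtain A where "A \<in> P" using assms unfolding closed_ideal_def by blast
    thus ?thesis using assms closedin_empty[of X] unfolding closed_ideal_def by blast
  qed
  moreover have "\<forall>x. x \<notin> topspace X \<longrightarrow> g x = 0" unfolding g_def by simp
  ultimately have "g \<in> CP X P" unfolding CP_def by simp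
  thus ?thesis unfolding g_def .
qed

lemma CP_ideal_pw:
  assumes r: "ring (CP_ring X P)" and sub: "I \<subseteq> CP X P" and z: "(\<lambda>x. 0) \<in> I"
    and ad: "\<And>f g. f \<in> I \<Longrightarrow> g \<in> I \<Longrightarrow> (\<lambda>x. f x + g x) \<in> I"
    and ng: "\<And>f. f \<in> I \<Longrightarrow> (\<lambda>x. - f x) \<in> I"
    and ml: "\<And>f h. f \<in> I \<Longrightarrow> h \<in> CP X P \<Longrightarrow> (\<lambda>x. h x * f x) \<in> I"
  shows "ideal I (CP_ring X P)"
proof -
  interpret ring "CP_ring X P" by (rule r)
  show ?thesis
  proof (rule idealI[OF r])
    show "subgroup I (add_monoid (CP_ring X P))"
    proof (rule add.subgroupI)
      show "I \<subseteq> carrier (CP_ring X P)" using sub by simp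
      show "I \<noteq> {}" using z by blast
      show "\<And>a. a \<in> I \<Longrightarrow> \<ominus>\<^bsub>CP_ring X P\<^esub> a \<in> I"
        using CP_neg[OF r] sub ng by auto
      show "\<And>a b. a \<in> I \<Longrightarrow> b \<in> I \<Longrightarrow> a \<oplus>\<^bsub>CP_ring X P\<^esub> b \<in> I"
        using ad by simp
    qed
    show "\<And>a x. a \<in> I \<Longrightarrow> x \<in> carrier (CP_ring X P) \<Longrightarrow> x \<otimes>\<^bsub>CP_ring X P\<^esub> a \<in> I"
      using ml by simp
    show "\<And>a x. a \<in> I \<Longrightarrow> x \<in> carrier (CP_ring X P) \<Longrightarrow> a \<otimes>\<^bsub>CP_ring X P\<^esub> x \<in> I"
      using ml by (simp add: mult.commute)
  qed
qed

lemma CP_Mx_max: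
  assumes r: "ring (CP_ring X P)" and cI: "closed_ideal X P" and x: "x \<in> topspace X"
  shows "maximalideal {f \<in> CP X P. f x = 0} (CP_ring X P)"
proof -
  interpret ring "CP_ring X P" by (rule r)
  let ?M = "{f \<in> CP X P. f x = 0}"
  have idM: "ideal ?M (CP_ring X P)"
  proof (rule CP_ideal_pw[OF r])
    show "(\<lambda>x. 0) \<in> ?M" using zero_closed by simp
    show "\<And>f g. f \<in> ?M \<Longrightarrow> g \<in> ?M \<Longrightarrow> (\<lambda>x. f x + g x) \<in> ?M"
      using add.m_closed by simp
    show "\<And>f. f \<in> ?M \<Longrightarrow> (\<lambda>x. - f x) \<in> ?M"
      using CP_neg[OF r] add.inv_closed by (auto simp del: a_inv_closed)
    show "\<And>f h. f \<in> ?M \<Longrightarrow> h \<in> CP X P \<Longrightarrow> (\<lambda>x. h x * f x) \<in> ?M"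
      using m_closed by simp
  qed auto
  show ?thesis
  proof (rule maximalidealI[OF idM])
    show "carrier (CP_ring X P) \<noteq> ?M"
    proof
      assume eq: "carrier (CP_ring X P) = ?M"
      have "\<one>\<^bsub>CP_ring X P\<^esub> \<in> ?M" using one_closed unfolding eq .
      thus False using x by simp
    qed
    fix J assume J: "ideal J (CP_ring X P)" "?M \<subseteq> J" "J \<subseteq> carrier (CP_ring X P)"
    show "J = ?M \<or> J = carrier (CP_ring X P)"
    proof (cases "J = ?M")
      case False
      then obtain g where g: "g \<in> J" "g x \<noteq> 0" using J by auto
      have gc: "g \<in> CP X P" using g J by auto
      define k where "k = (\<lambda>y. if y \<in> topspace X then 1 / g x else 0)"
      have kc: "k \<in> CP X P" unfolding k_def by (rule CP_const[OF cI])
      have kg: "k \<otimes>\<^bsub>CP_ring X P\<^esub> g \<in> J" using ideal.I_l_closed[OF J(1) g(1)] kc by simp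
      have kgc: "k \<otimes>\<^bsub>CP_ring X P\<^esub> g \<in> CP X P" using kg J by auto
      define h where "h = \<one>\<^bsub>CP_ring X P\<^esub> \<oplus>\<^bsub>CP_ring X P\<^esub> (\<ominus>\<^bsub>CP_ring X P\<^esub> (k \<otimes>\<^bsub>CP_ring X P\<^esub> g))"
      have hc: "h \<in> CP X P" unfolding h_def using kgc by (metis CPr_simps(1) a_inv_closed add.m_closed one_closed)
      have hv: "h = (\<lambda>y. (if y \<in> topspace X then 1 else 0) - k y * g y)"
        unfolding h_def using CP_neg[OF r kgc] by (simp add: fun_eq_iff)
      have "h x = 0" using hv x g(2) by (simp add: k_def)
      hence "h \<in> J" using hc J by auto
      have "h \<oplus>\<^bsub>CP_ring X P\<^esub> (k \<otimes>\<^bsub>CP_ring X P\<^esub> g) \<in> J"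
        by (rule additive_subgroup.a_closed[OF ideal.axioms(1)[OF J(1)] \<open>h \<in> J\<close> kg])
      moreover have "h \<oplus>\<^bsub>CP_ring X P\<^esub> (k \<otimes>\<^bsub>CP_ring X P\<^esub> g) = \<one>\<^bsub>CP_ring X P\<^esub>"
        using hv by (simp add: fun_eq_iff)
      ultimately have "\<one>\<^bsub>CP_ring X P\<^esub> \<in> J" by simp
      hence "J = carrier (CP_ring X P)" by (rule ideal.one_imp_carrier[OF J(1)])
      thus ?thesis by simp
    qed simp
  qed
qed

lemma CP_Mset:
  assumes r: "ring (CP_ring X P)" and cI: "closed_ideal X P"
    and b: "b \<in> Mset (CP_ring X P) a" and a: "a \<in> CP X P" and x: "x \<in> topspace X" "a x = 0"
  shows "b x = 0"
proof -
  have "maximalideal {f \<in> CP X P. f x = 0} (CP_ring X P) \<and> a \<in> {f \<in> CP X P. f x = 0}"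
    using CP_Mx_max[OF r cI x(1)] a x by simp
  thus ?thesis using b unfolding Mset_def by blast
qed

lemma CP_mult:
  assumes r: "ring (CP_ring X P)" and "f \<in> CP X P" "g \<in> CP X P"
  shows "(\<lambda>x. f x * g x) \<in> CP X P"
proof -
  interpret ring "CP_ring X P" by (rule r)
  show ?thesis using m_closed[of f g] assms by simp
qed

lemma CP_basis:
  assumes r: "ring (CP_ring X P)"
    and g: "generate_topology_on {coz X f | f. f \<in> CP X P} V"
  shows "\<forall>y\<in>V. \<exists>f\<in>CP X P. y \<in> coz X f \<and> coz X f \<subseteq> V"
  using g
proof (induction rule: generate_topology_on.induct)
  case Empty
  then show ?case by simp
next
  case (Int a b)
  show ?case
  proof
    fix y assume "y \<in> a \<inter> b"
    then obtain f g where f: "f \<in> CP X P" "y \<in> coz X f" "coz X f \<subseteq> a"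
      and g: "g \<in> CP X P" "y \<in> coz X g" "coz X g \<subseteq> b" using Int.IH by blast
    have "(\<lambda>x. f x * g x) \<in> CP X P"
      using CP_mult[OF r f(1) g(1)] .
    moreover have "coz X (\<lambda>x. f x * g x) = coz X f \<inter> coz X g"
      by (auto simp: coz_def ZP_def)
    ultimately show "\<exists>f\<in>CP X P. y \<in> coz X f \<and> coz X f \<subseteq> a \<inter> b"
      using f g by blast
  qed
next
  case (UN K)
  then show ?case by blast
next
  case (Basis s)
  then show ?case by blast
qed

lemma CP_add:
  assumes r: "ring (CP_ring X P)" and "f \<in> CP X P" "g \<in> CP X P"
  shows "(\<lambda>x. f x + g x) \<in> CP X P"
proof -
  interpret ring "CP_ring X P" by (rule r)
  show ?thesis using add.m_closed[of f g] assms by simp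
qed

lemma CP_uminus:
  assumes r: "ring (CP_ring X P)" and "f \<in> CP X P"
  shows "(\<lambda>x. - f x) \<in> CP X P"
proof -
  interpret ring "CP_ring X P" by (rule r)
  show ?thesis using a_inv_closed[of f] CP_neg[OF r] assms by simp
qed

lemma CP_vanish: "f \<in> CP X P \<Longrightarrow> x \<notin> topspace X \<Longrightarrow> f x = 0"
  by (simp add: CP_def)

lemma coz_add: "coz X (\<lambda>x. f x + g x) \<subseteq> coz X f \<union> coz X g"
  by (auto simp: coz_def ZP_def)

lemma coz_mult: "coz X (\<lambda>x. h x * f x) \<subseteq> coz X f"
  by (auto simp: coz_def ZP_def)

theorem theorem2p16:
  fixes X :: "'a topology" and P :: "'a set set" and E :: "('a \<Rightarrow> real) set"
  assumes "t1_space X"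
    and "closed_ideal X P"
    and "ideal E (CP_ring X P)"
    and "E \<noteq> {\<zero>\<^bsub>CP_ring X P\<^esub>}"
  shows "((\<forall>I. z_ideal (CP_ring X P) I \<and> I \<noteq> {\<zero>\<^bsub>CP_ring X P\<^esub>}
              \<longrightarrow> E \<inter> I \<noteq> {\<zero>\<^bsub>CP_ring X P\<^esub>})
          \<longleftrightarrow> essential_ideal (CP_ring X P) E)
       \<and> (essential_ideal (CP_ring X P) E
          \<longleftrightarrow> (XP X P) interior_of (\<Inter> {ZP X f | f. f \<in> E}) = {})"
proof -
  have r: "ring (CP_ring X P)" using ideal.axioms(2)[OF assms(3)] .
  have cI: "closed_ideal X P" by fact
  have "E \<subseteq> carrier (CP_ring X P)"
    using additive_subgroup.a_subset[OF ideal.axioms(1)[OF assms(3)]] .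
  hence Esub: "E \<subseteq> CP X P" by simp
  define Z where "Z = \<Inter> {ZP X f | f. f \<in> E}"
  have AC: "XP X P interior_of Z = {}"
    if A: "\<forall>I. z_ideal (CP_ring X P) I \<and> I \<noteq> {\<zero>\<^bsub>CP_ring X P\<^esub>}
              \<longrightarrow> E \<inter> I \<noteq> {\<zero>\<^bsub>CP_ring X P\<^esub>}"
  proof (rule ccontr)
    assume "XP X P interior_of Z \<noteq> {}"
    then obtain y where y: "y \<in> XP X P interior_of Z" by blast
    have "generate_topology_on {coz X f | f. f \<in> CP X P} (XP X P interior_of Z)"
      using openin_interior_of[of "XP X P" Z] unfolding XP_def
      by (rule openin_topology_generated_by)
    hence "\<forall>y\<in>XP X P interior_of Z. \<exists>f\<in>CP X P. y \<in> coz X f \<and> coz X f \<subseteq> XP X P interior_of Z"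
      by (rule CP_basis[OF r])
    then obtain f where f: "f \<in> CP X P" "y \<in> coz X f" "coz X f \<subseteq> XP X P interior_of Z"
      using y by blast
    have fZ: "coz X f \<subseteq> Z" using f(3) interior_of_subset[of "XP X P" Z] by (rule order_trans)
    define I where "I = {g \<in> CP X P. coz X g \<subseteq> Z}"
    have idI: "ideal I (CP_ring X P)"
    proof (rule CP_ideal_pw[OF r])
      show "I \<subseteq> CP X P" unfolding I_def by blast
      have z0: "(\<lambda>x. 0) \<in> CP X P" using CP_const[OF cI, of 0] by simp
      have "coz X (\<lambda>x. 0) = {}" by (simp add: coz_def ZP_def)
      thus "(\<lambda>x. 0) \<in> I" unfolding I_def using z0 by simp
      show "(\<lambda>x. f x + g x) \<in> I" if "f \<in> I" "g \<in> I" for f g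
      proof -
        have c: "f \<in> CP X P" "g \<in> CP X P" "coz X f \<subseteq> Z" "coz X g \<subseteq> Z"
          using that unfolding I_def by simp_all
        have "coz X (\<lambda>x. f x + g x) \<subseteq> coz X f \<union> coz X g" by (rule coz_add)
        hence "coz X (\<lambda>x. f x + g x) \<subseteq> Z" using c(3,4) by (rule subset_trans[OF _ Un_least])
        thus ?thesis unfolding I_def using CP_add[OF r c(1,2)] by simp
      qed
      show "(\<lambda>x. - f x) \<in> I" if "f \<in> I" for f
      proof -
        have c: "f \<in> CP X P" "coz X f \<subseteq> Z" using that unfolding I_def by simp_all
        have "coz X (\<lambda>x. - f x) = coz X f" by (simp add: coz_def ZP_def)
        thus ?thesis unfolding I_def using CP_uminus[OF r c(1)] c(2) by simp
      qed
      show "(\<lambda>x. h x * f x) \<in> I" if "f \<in> I" "h \<in> CP X P" for f h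
      proof -
        have c: "f \<in> CP X P" "coz X f \<subseteq> Z" using that unfolding I_def by simp_all
        have "coz X (\<lambda>x. h x * f x) \<subseteq> coz X f" by (rule coz_mult)
        hence "coz X (\<lambda>x. h x * f x) \<subseteq> Z" using c(2) by (rule subset_trans)
        thus ?thesis unfolding I_def using CP_mult[OF r that(2) c(1)] by simp
      qed
    qed
    have zI: "z_ideal (CP_ring X P) I"
      unfolding z_ideal_def
    proof (intro conjI idI ballI subsetI)
      fix a b assume a: "a \<in> I" and b: "b \<in> Mset (CP_ring X P) a"
      have bc: "b \<in> CP X P" using b unfolding Mset_def by simp
      have ac: "a \<in> CP X P" using a unfolding I_def by simp
      have "coz X b \<subseteq> coz X a"
      proof
        fix x assume "x \<in> coz X b"
        hence x: "x \<in> topspace X" "b x \<noteq> 0" by (auto simp: coz_def ZP_def)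
        hence "a x \<noteq> 0" using CP_Mset[OF r cI b ac] by blast
        thus "x \<in> coz X a" using x by (simp add: coz_def ZP_def)
      qed
      thus "b \<in> I" using a bc unfolding I_def by auto
    qed
    have fI: "f \<in> I" unfolding I_def using f fZ by simp
    have "f \<noteq> (\<lambda>x. 0)" using f(2) by (auto simp: coz_def ZP_def)
    hence "I \<noteq> {\<zero>\<^bsub>CP_ring X P\<^esub>}" using fI by auto
    hence ne: "E \<inter> I \<noteq> {\<zero>\<^bsub>CP_ring X P\<^esub>}" using A[rule_format, OF conjI[OF zI]] by simp
    have "E \<inter> I \<subseteq> {\<zero>\<^bsub>CP_ring X P\<^esub>}"
    proof
      fix g assume g: "g \<in> E \<inter> I"
      have "g = (\<lambda>x. 0)"
      proof
        fix x show "g x = 0"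
        proof (cases "x \<in> topspace X")
          case True
          show ?thesis
          proof (rule ccontr)
            assume "g x \<noteq> 0"
            hence "x \<in> coz X g" using True by (simp add: coz_def ZP_def)
            hence "x \<in> Z" using g unfolding I_def by blast
            hence "x \<in> ZP X g" using g unfolding Z_def by blast
            thus False using \<open>g x \<noteq> 0\<close> by (simp add: ZP_def)
          qed
        next
          case False
          have "g \<in> CP X P" using g Esub by blast
          thus ?thesis using CP_vanish False by metis
        qed
      qed
      thus "g \<in> {\<zero>\<^bsub>CP_ring X P\<^esub>}" by simp
    qed
    moreover have "\<zero>\<^bsub>CP_ring X P\<^esub> \<in> E \<inter> I"
      using additive_subgroup.zero_closed[OF ideal.axioms(1)[OF assms(3)]]
        additive_subgroup.zero_closed[OF ideal.axioms(1)[OF idI]] by blast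
    ultimately show False using ne by blast
  qed
  have CB: "essential_ideal (CP_ring X P) E" if C: "XP X P interior_of Z = {}"
    unfolding essential_ideal_def
  proof (intro conjI assms(3) allI impI)
    fix I assume I: "ideal I (CP_ring X P) \<and> I \<noteq> {\<zero>\<^bsub>CP_ring X P\<^esub>}"
    have "\<zero>\<^bsub>CP_ring X P\<^esub> \<in> I"
      using additive_subgroup.zero_closed[OF ideal.axioms(1)] I by blast
    then obtain f where fI: "f \<in> I" and fne: "f \<noteq> (\<lambda>x. 0)" using I by auto
    have fc: "f \<in> CP X P" using fI I
      by (metis CPr_simps(1) additive_subgroup.a_subset ideal.axioms(1) subsetD)
    obtain y where "f y \<noteq> 0" using fne by auto
    hence yc: "y \<in> coz X f" using CP_vanish[OF fc] by (auto simp: coz_def ZP_def)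
    have op: "openin (XP X P) (coz X f)" unfolding XP_def
      by (rule topology_generated_by_Basis) (use fc in blast)
    have "\<not> coz X f \<subseteq> Z"
    proof
      assume "coz X f \<subseteq> Z"
      hence "coz X f \<subseteq> XP X P interior_of Z" using interior_of_maximal op by blast
      thus False using C yc by blast
    qed
    then obtain z where z: "z \<in> coz X f" "z \<notin> Z" by blast
    then obtain g where g: "g \<in> E" "z \<notin> ZP X g" unfolding Z_def by blast
    have gz: "g z \<noteq> 0" using g(2) z(1) by (auto simp: coz_def ZP_def)
    have fz: "f z \<noteq> 0" using z(1) by (auto simp: coz_def ZP_def)
    have gc: "g \<in> CP X P" using g Esub by blast
    have "g \<otimes>\<^bsub>CP_ring X P\<^esub> f \<in> E" using ideal.I_r_closed[OF assms(3) g(1)] fc by simp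
    moreover have "g \<otimes>\<^bsub>CP_ring X P\<^esub> f \<in> I" using ideal.I_l_closed[of I "CP_ring X P" f g] I fI gc by simp
    moreover have "g \<otimes>\<^bsub>CP_ring X P\<^esub> f \<noteq> \<zero>\<^bsub>CP_ring X P\<^esub>"
    proof
      assume "g \<otimes>\<^bsub>CP_ring X P\<^esub> f = \<zero>\<^bsub>CP_ring X P\<^esub>"
      hence "g z * f z = 0" by (simp add: fun_eq_iff)
      thus False using gz fz by simp
    qed
    ultimately show "E \<inter> I \<noteq> {\<zero>\<^bsub>CP_ring X P\<^esub>}" by blast
  qed
  have BA: "\<forall>I. z_ideal (CP_ring X P) I \<and> I \<noteq> {\<zero>\<^bsub>CP_ring X P\<^esub>}
              \<longrightarrow> E \<inter> I \<noteq> {\<zero>\<^bsub>CP_ring X P\<^esub>}"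
    if B: "essential_ideal (CP_ring X P) E"
  proof (intro allI impI)
    fix I assume "z_ideal (CP_ring X P) I \<and> I \<noteq> {\<zero>\<^bsub>CP_ring X P\<^esub>}"
    hence "ideal I (CP_ring X P) \<and> I \<noteq> {\<zero>\<^bsub>CP_ring X P\<^esub>}" unfolding z_ideal_def by simp
    thus "E \<inter> I \<noteq> {\<zero>\<^bsub>CP_ring X P\<^esub>}" using B unfolding essential_ideal_def by simp
  qed
  show ?thesis unfolding Z_def[symmetric]
  proof (intro conjI iffI)
    show "essential_ideal (CP_ring X P) E" if "\<forall>I. z_ideal (CP_ring X P) I \<and> I \<noteq> {\<zero>\<^bsub>CP_ring X P\<^esub>}
              \<longrightarrow> E \<inter> I \<noteq> {\<zero>\<^bsub>CP_ring X P\<^esub>}"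
      using CB[OF AC[OF that]] .
    show "\<forall>I. z_ideal (CP_ring X P) I \<and> I \<noteq> {\<zero>\<^bsub>CP_ring X P\<^esub>}
              \<longrightarrow> E \<inter> I \<noteq> {\<zero>\<^bsub>CP_ring X P\<^esub>}" if "essential_ideal (CP_ring X P) E"
      using BA[OF that] .
    show "XP X P interior_of Z = {}" if "essential_ideal (CP_ring X P) E"
      using AC[OF BA[OF that]] .
    show "essential_ideal (CP_ring X P) E" if "XP X P interior_of Z = {}"
      using CB[OF that] .
  qed
qed

end
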